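(* Let $K$ be a field of characteristic zero, $n\ge 1$, and $M=\mathrm{Mat}(n,K)$. Let $U\subset \mathrm{GL}(n,K)$ be the group of upper triangular matrices with all diagonal entries equal to $1$, acting on the polynomial ring $K[M]$ by $(\rho_g f)(A)=f(g^{-1}Ag)$. For every $1\le k\le n$ and $0\le i\le k-1$, the polynomial $J_{k,i}\in K[M]$ (defined in the context) is $U$-invariant, i.e. $\rho_u J_{k,i}=J_{k,i}$ for all $u\in U$.
   Context: Let $\{x_{ij}\}_{1\le i,j\le n}$ be the standard coordinate functions on $M$, let $X=(x_{ij})$ be the generic matrix and $X^*=(x^*_{ij})$ its adjugate matrix, so $XX^*=X^*X=\det X\cdot E$ (entries of $X^*$ are polynomials in the $x_{ij}$). For $1\le k\le n$ and $0\le i\le k-1$, $J_{k,i}$ is the determinant of the $k\times k$ matrix whose first $k-i$ rows are the rows $n-k+i+1,\dots,n$ of $X$ restricted to columns $1,\dots,k$, and whose last $i$ rows are the rows $n-i+1,\dots,n$ of $X^*$ restricted to columns $1,\dots,k$. In particular $J_{k,0}$ is the lower-left corner $k\times k$ minor of $X$ (rows $n-k+1,\dots,n$, columns $1,\dots,k$). *)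

theory Defs
  imports "Jordan_Normal_Form.Determinant"
begin

definition unitriangular_upper :: "nat \<Rightarrow> 'a::field mat set" where
  "unitriangular_upper n = {u \<in> carrier_mat n n.
     (\<forall>i<n. u $$ (i,i) = 1) \<and> (\<forall>i<n. \<forall>j<i. u $$ (i,j) = 0)}"

text \<open>J_{k,i}(X) for an n x n matrix X (0-indexed rows/columns):
  first k-i rows are rows n-k+i+1..n of X (1-indexed), last i rows are rows
  n-i+1..n of the adjugate X*, all restricted to columns 1..k.\<close>
definition J_poly :: "nat \<Rightarrow> nat \<Rightarrow> nat \<Rightarrow> 'a::field mat \<Rightarrow> 'a" where
  "J_poly n k i X = det (mat k k (\<lambda>(r,c).
      if r < k - i then X $$ (n - k + i + r, c)
      else adj_mat X $$ (n - i + (r - (k - i)), c)))"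

definition rho :: "'a::field mat \<Rightarrow> 'a mat \<Rightarrow> ('a mat \<Rightarrow> 'b) \<Rightarrow> ('a mat \<Rightarrow> 'b)" where
  "rho g ginv f = (\<lambda>A. f (ginv * A * g))"

end

theory Submission imports Defs "Jordan_Normal_Form.Char_Poly" begin

lemma unitri_det:
  fixes U :: "'b::comm_ring_1 mat"
  assumes "U \<in> carrier_mat m m" "\<And>i. i<m \<Longrightarrow> U$$(i,i) = 1" "\<And>i j. i<m \<Longrightarrow> j<i \<Longrightarrow> U$$(i,j) = 0"
  shows "det U = 1"
proof -
  have ut: "upper_triangular U" using assms unfolding upper_triangular_def by auto
  have "det U = prod_list (diag_mat U)" by (rule det_upper_triangular[OF ut assms(1)])
  also have "\<dots> = 1" unfolding prod_list_diag_prod using assms by auto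
  finally show ?thesis .
qed

lemma adj_conj_idom:
  fixes P Q A :: "'b::idom mat"
  assumes P: "P \<in> carrier_mat n n" and Q: "Q \<in> carrier_mat n n" and A: "A \<in> carrier_mat n n"
    and PQ: "P * Q = 1\<^sub>m n" and QP: "Q * P = 1\<^sub>m n" and dA: "det A \<noteq> 0"
  shows "adj_mat (P * A * Q) = P * adj_mat A * Q"
proof -
  define Y where "Y = P * A * Q"
  define Z where "Z = P * adj_mat A * Q"
  have adjA: "adj_mat A \<in> carrier_mat n n" using adj_mat(1)[OF A] .
  have Y: "Y \<in> carrier_mat n n" unfolding Y_def using P A Q by auto
  have Zc: "Z \<in> carrier_mat n n" unfolding Z_def using P adjA Q by auto
  have adjY: "adj_mat Y \<in> carrier_mat n n" using adj_mat(1)[OF Y] .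
  have dY: "det Y = det A"
  proof -
    have "det Y = det P * det A * det Q" unfolding Y_def using P A Q by (simp add: det_mult)
    also have "det P * det Q = 1" using det_mult[OF P Q] PQ by simp
    ultimately show ?thesis by (metis mult.commute mult.left_commute mult.right_neutral)
  qed
  have YZ: "Y * Z = det A \<cdot>\<^sub>m 1\<^sub>m n"
  proof -
    have "Y * Z = P * A * (Q * P) * adj_mat A * Q" unfolding Y_def Z_def
      using P A Q adjA by (simp add: assoc_mult_mat[of _ n n _ n _ n])
    also have "\<dots> = P * (A * adj_mat A) * Q" using P A Q adjA QP
      by (simp add: assoc_mult_mat[of _ n n _ n _ n])
    also have "\<dots> = P * (det A \<cdot>\<^sub>m 1\<^sub>m n) * Q" using adj_mat(2)[OF A] by simp
    also have "\<dots> = det A \<cdot>\<^sub>m (P * Q)" using P Q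
      by (simp add: mult_smult_distrib[OF P one_carrier_mat] mult_smult_assoc_mat[OF P Q])
    finally show ?thesis using PQ by simp
  qed
  have "adj_mat Y * Y * Z = det A \<cdot>\<^sub>m Z" using adj_mat(3)[OF Y] dY Zc by (simp add: mult_smult_assoc_mat[OF one_carrier_mat Zc])
  moreover have "adj_mat Y * Y * Z = det A \<cdot>\<^sub>m adj_mat Y"
  proof -
    have "adj_mat Y * Y * Z = adj_mat Y * (Y * Z)" using adjY Y Zc by (simp add: assoc_mult_mat[of _ n n _ n _ n])
    thus ?thesis using YZ using adjY by (simp add: mult_smult_distrib[OF adjY one_carrier_mat] right_mult_one_mat[OF adjY])
  qed
  ultimately have eq: "det A \<cdot>\<^sub>m Z = det A \<cdot>\<^sub>m adj_mat Y" by simp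
  have "Z = adj_mat Y"
  proof (rule eq_matI)
    fix i j assume ij: "i < dim_row (adj_mat Y)" "j < dim_col (adj_mat Y)"
    have "(det A \<cdot>\<^sub>m Z) $$ (i,j) = (det A \<cdot>\<^sub>m adj_mat Y) $$ (i,j)" using eq by simp
    thus "Z $$ (i,j) = adj_mat Y $$ (i,j)" using ij adjY Zc dA by simp
  qed (use adjY Zc in auto)
  thus ?thesis unfolding Y_def Z_def by simp
qed

lemma (in comm_ring_hom) hom_adj_mat:
  assumes A: "A \<in> carrier_mat n n"
  shows "adj_mat (mat\<^sub>h A) = mat\<^sub>h (adj_mat A)"
proof -
  have md: "mat_delete (mat\<^sub>h A) i j = mat\<^sub>h (mat_delete A i j)" if "i<n" "j<n" for i j
    using A that by (auto simp: mat_delete_def)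
  show ?thesis
    by (rule eq_matI, insert A, auto simp: adj_mat_def cofactor_def md hom_distribs)
qed

lemma adj_conj:
  fixes P Q A :: "'b::idom mat"
  assumes P: "P \<in> carrier_mat n n" and Q: "Q \<in> carrier_mat n n" and A: "A \<in> carrier_mat n n"
    and PQ: "P * Q = 1\<^sub>m n" and QP: "Q * P = 1\<^sub>m n"
  shows "adj_mat (P * A * Q) = P * adj_mat A * Q"
proof -
  interpret c: comm_ring_hom "\<lambda>a::'b. [:a:]" by unfold_locales auto
  have hh: "comm_ring_hom (\<lambda>p::'b poly. poly p 0)" by unfold_locales auto
  have hs: "semiring_hom (\<lambda>p::'b poly. poly p 0)" by unfold_locales auto
  define Pp where "Pp = map_mat (\<lambda>a. [:a:]) P"
  define Qp where "Qp = map_mat (\<lambda>a. [:a:]) Q"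
  define Ap where "Ap = char_poly_matrix (-A)"
  have Pp: "Pp \<in> carrier_mat n n" and Qp: "Qp \<in> carrier_mat n n" and Ap: "Ap \<in> carrier_mat n n"
    unfolding Pp_def Qp_def Ap_def using P Q A by auto
  have PQp: "Pp * Qp = 1\<^sub>m n" unfolding Pp_def Qp_def
    using c.mat_hom_mult[OF P Q] PQ c.mat_hom_one by simp
  have QPp: "Qp * Pp = 1\<^sub>m n" unfolding Pp_def Qp_def
    using c.mat_hom_mult[OF Q P] QP c.mat_hom_one by simp
  have "coeff (char_poly (-A)) n = 1" using degree_monic_char_poly[of "-A" n] A by auto
  hence dAp: "det Ap \<noteq> 0" unfolding Ap_def char_poly_def by auto
  have main: "adj_mat (Pp * Ap * Qp) = Pp * adj_mat Ap * Qp"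
    by (rule adj_conj_idom[OF Pp Qp Ap PQp QPp dAp])
  have adjAp: "adj_mat Ap \<in> carrier_mat n n" using adj_mat(1)[OF Ap] .
  have eP: "map_mat (\<lambda>p. poly p 0) Pp = P" unfolding Pp_def by (rule eq_matI, auto)
  have eQ: "map_mat (\<lambda>p. poly p 0) Qp = Q" unfolding Qp_def by (rule eq_matI, auto)
  have eA: "map_mat (\<lambda>p. poly p 0) Ap = A" unfolding Ap_def char_poly_matrix_def
    using A by (intro eq_matI, auto)
  have PAQp: "Pp * Ap * Qp \<in> carrier_mat n n" using Pp Ap Qp by auto
  have "map_mat (\<lambda>p. poly p 0) (Pp * Ap * Qp) = P * A * Q"
    using Pp Ap Qp eP eA eQ P A Q assoc_mult_mat[OF P A Q]
    by (simp add: semiring_hom.mat_hom_mult[OF hs, of _ n n _ n] mult_carrier_mat[OF Pp Ap])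
  hence "map_mat (\<lambda>p. poly p 0) (adj_mat (Pp * Ap * Qp)) = adj_mat (P * A * Q)"
    using comm_ring_hom.hom_adj_mat[OF hh PAQp] by simp
  moreover have "map_mat (\<lambda>p. poly p 0) (Pp * adj_mat Ap * Qp) = P * adj_mat A * Q"
  proof -
    have e2: "map_mat (\<lambda>p. poly p 0) (adj_mat Ap) = adj_mat A"
      using comm_ring_hom.hom_adj_mat[OF hh Ap] eA by simp
    have "map_mat (\<lambda>p. poly p 0) (Pp * adj_mat Ap * Qp) = map_mat (\<lambda>p. poly p 0) (Pp * adj_mat Ap) * Q"
      using semiring_hom.mat_hom_mult[OF hs mult_carrier_mat[OF Pp adjAp] Qp] eQ by simp
    also have "map_mat (\<lambda>p. poly p 0) (Pp * adj_mat Ap) = P * adj_mat A"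
      using semiring_hom.mat_hom_mult[OF hs Pp adjAp] eP e2 by simp
    finally show ?thesis .
  qed
  ultimately show ?thesis using main by simp
qed


definition Mk :: "nat \<Rightarrow> nat \<Rightarrow> nat \<Rightarrow> 'a::field mat \<Rightarrow> 'a mat \<Rightarrow> 'a mat" where
  "Mk n k i Y1 Y2 = mat k k (\<lambda>(r,c).
      if r < k - i then Y1 $$ (n - k + i + r, c)
      else Y2 $$ (n - i + (r - (k - i)), c))"

lemma J_Mk: "J_poly n k i X = det (Mk n k i X (adj_mat X))"
  unfolding J_poly_def Mk_def ..

lemma right_mult_entry:
  fixes Y u :: "'a::field mat"
  assumes Y: "Y \<in> carrier_mat n n" and u: "u \<in> unitriangular_upper n"
    and p: "p < n" and c: "c < k" and k: "k \<le> n"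
  shows "(Y * u) $$ (p,c) = (\<Sum>t<k. Y $$ (p,t) * u $$ (t,c))"
proof -
  have uc: "u \<in> carrier_mat n n" and z: "\<And>a b. a<n \<Longrightarrow> b<a \<Longrightarrow> u$$(a,b) = 0"
    using u unfolding unitriangular_upper_def by auto
  have "(Y * u) $$ (p,c) = (\<Sum>t\<in>{0..<n}. Y $$ (p,t) * u $$ (t,c))"
    using Y uc p c k by (simp add: scalar_prod_def)
  also have "{0..<n} = {0..<k} \<union> {k..<n}" using k by auto
  also have "(\<Sum>t\<in>{0..<k} \<union> {k..<n}. Y $$ (p,t) * u $$ (t,c)) =
     (\<Sum>t\<in>{0..<k}. Y $$ (p,t) * u $$ (t,c)) + (\<Sum>t\<in>{k..<n}. Y $$ (p,t) * u $$ (t,c))"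
    by (rule sum.union_disjoint) auto
  also have "(\<Sum>t\<in>{k..<n}. Y $$ (p,t) * u $$ (t,c)) = 0"
    using z c by (intro sum.neutral) auto
  finally show ?thesis by (simp add: lessThan_atLeast0)
qed

lemma left_mult_entry:
  fixes Z u :: "'a::field mat"
  assumes Z: "Z \<in> carrier_mat n n" and u: "u \<in> unitriangular_upper n"
    and ap: "a \<le> p" and p: "p < n" and c: "c < n"
  shows "(u * Z) $$ (p,c) = (\<Sum>s<n-a. u $$ (p, a+s) * Z $$ (a+s,c))"
proof -
  have uc: "u \<in> carrier_mat n n" and z: "\<And>a b. a<n \<Longrightarrow> b<a \<Longrightarrow> u$$(a,b) = 0"
    using u unfolding unitriangular_upper_def by auto
  have "(u * Z) $$ (p,c) = (\<Sum>t\<in>{0..<n}. u $$ (p,t) * Z $$ (t,c))"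
    using Z uc p c by (simp add: scalar_prod_def)
  also have "{0..<n} = {0..<a} \<union> {a..<n}" using ap p by auto
  also have "(\<Sum>t\<in>{0..<a} \<union> {a..<n}. u $$ (p,t) * Z $$ (t,c)) =
     (\<Sum>t\<in>{0..<a}. u $$ (p,t) * Z $$ (t,c)) + (\<Sum>t\<in>{a..<n}. u $$ (p,t) * Z $$ (t,c))"
    by (rule sum.union_disjoint) auto
  also have "(\<Sum>t\<in>{0..<a}. u $$ (p,t) * Z $$ (t,c)) = 0"
    using z ap p by (intro sum.neutral) auto
  also have "(\<Sum>t\<in>{a..<n}. u $$ (p,t) * Z $$ (t,c)) = (\<Sum>s<n-a. u $$ (p, a+s) * Z $$ (a+s,c))"
  proof -
    have "{a..<n} = (\<lambda>s. a + s) ` {..<n-a}" using ap p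
      by (auto simp: image_iff) (rule_tac x="x - a" in bexI, auto)
    thus ?thesis by (simp add: sum.reindex inj_on_def)
  qed
  finally show ?thesis by simp
qed

lemma Mk_right:
  fixes Y1 Y2 u :: "'a::field mat"
  assumes Y1: "Y1 \<in> carrier_mat n n" and Y2: "Y2 \<in> carrier_mat n n"
    and u: "u \<in> unitriangular_upper n" and k: "k \<le> n" and i: "i \<le> k"
  shows "Mk n k i (Y1 * u) (Y2 * u) = Mk n k i Y1 Y2 * mat k k (\<lambda>(t,c). u $$ (t,c))"
proof (rule eq_matI)
  fix r c assume r: "r < dim_row (Mk n k i Y1 Y2 * mat k k (\<lambda>(t,c). u $$ (t,c)))"
    and c: "c < dim_col (Mk n k i Y1 Y2 * mat k k (\<lambda>(t,c). u $$ (t,c)))"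
  hence r: "r < k" and c: "c < k" by (auto simp: Mk_def)
  have R: "(Mk n k i Y1 Y2 * mat k k (\<lambda>(t,c). u $$ (t,c))) $$ (r,c) =
     (\<Sum>t<k. (if r < k - i then Y1 $$ (n - k + i + r, t) else Y2 $$ (n - i + (r - (k - i)), t)) * u $$ (t,c))"
    using r c by (simp add: Mk_def scalar_prod_def lessThan_atLeast0)
  show "Mk n k i (Y1 * u) (Y2 * u) $$ (r,c) = (Mk n k i Y1 Y2 * mat k k (\<lambda>(t,c). u $$ (t,c))) $$ (r,c)"
  proof (cases "r < k - i")
    case True
    have "n - k + i + r < n" using True k i by linarith
    then show ?thesis unfolding R using True r c right_mult_entry[OF Y1 u _ c k] by (simp add: Mk_def)
  next
    case False
    have "n - i + (r - (k - i)) < n" using False r k i by linarith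
    then show ?thesis unfolding R using False r c right_mult_entry[OF Y2 u _ c k] by (simp add: Mk_def)
  qed
qed (auto simp: Mk_def)

definition Dk :: "nat \<Rightarrow> nat \<Rightarrow> nat \<Rightarrow> 'a::field mat \<Rightarrow> 'a mat" where
  "Dk n k i u = mat k k (\<lambda>(r,r').
     if r < k - i then (if r' < k - i then u $$ (n - k + i + r, n - k + i + r') else 0)
     else (if r' < k - i then 0 else u $$ (n - i + (r - (k - i)), n - i + (r' - (k - i)))))"

lemma Mk_left:
  fixes Z1 Z2 u :: "'a::field mat"
  assumes Z1: "Z1 \<in> carrier_mat n n" and Z2: "Z2 \<in> carrier_mat n n"
    and u: "u \<in> unitriangular_upper n" and k: "k \<le> n" and i: "i \<le> k"
  shows "Mk n k i (u * Z1) (u * Z2) = Dk n k i u * Mk n k i Z1 Z2"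
proof (rule eq_matI)
  fix r c assume r: "r < dim_row (Dk n k i u * Mk n k i Z1 Z2)"
    and c: "c < dim_col (Dk n k i u * Mk n k i Z1 Z2)"
  hence r: "r < k" and c: "c < k" by (auto simp: Mk_def Dk_def)
  define f where "f = (\<lambda>r'. Dk n k i u $$ (r,r') * Mk n k i Z1 Z2 $$ (r',c))"
  have R: "(Dk n k i u * Mk n k i Z1 Z2) $$ (r,c) = (\<Sum>r'\<in>{0..<k}. f r')"
    using r c by (simp add: Mk_def Dk_def scalar_prod_def f_def)
  have split: "(\<Sum>r'\<in>{0..<k}. f r') = (\<Sum>r'\<in>{0..<k-i}. f r') + (\<Sum>r'\<in>{k-i..<k}. f r')"
  proof -
    have "{0..<k} = {0..<k-i} \<union> {k-i..<k}" by auto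
    thus ?thesis by (simp add: sum.union_disjoint)
  qed
  have sh: "(\<Sum>r'\<in>{k-i..<k}. f r') = (\<Sum>s<i. f (k - i + s))"
  proof -
    have "{k-i..<k} = (\<lambda>s. k - i + s) ` {..<i}" using i
      by (auto simp: image_iff) (rule_tac x="x - (k - i)" in bexI, auto)
    thus ?thesis by (simp add: sum.reindex inj_on_def)
  qed
  have cn: "c < n" using c k by simp
  show "Mk n k i (u * Z1) (u * Z2) $$ (r,c) = (Dk n k i u * Mk n k i Z1 Z2) $$ (r,c)"
  proof (cases "r < k - i")
    case True
    have p: "n - k + i + r < n" using True k i by linarith
    have L: "Mk n k i (u * Z1) (u * Z2) $$ (r,c) = (u * Z1) $$ (n - k + i + r, c)"
      using True r c by (simp add: Mk_def)
    have e: "n - (n - k + i) = k - i" using k i by simp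
    have z: "(\<Sum>r'\<in>{k-i..<k}. f r') = 0" using True r by (intro sum.neutral) (auto simp: f_def Dk_def)
    have "(\<Sum>r'\<in>{0..<k-i}. f r') = (\<Sum>s<k-i. u $$ (n - k + i + r, n - k + i + s) * Z1 $$ (n - k + i + s, c))"
      using True r c by (auto simp: f_def Dk_def Mk_def lessThan_atLeast0 intro!: sum.cong)
    then show ?thesis unfolding L R split z
      using left_mult_entry[OF Z1 u _ p cn, of "n - k + i"] e by simp
  next
    case False
    have p: "n - i + (r - (k - i)) < n" using False r k i by linarith
    have L: "Mk n k i (u * Z1) (u * Z2) $$ (r,c) = (u * Z2) $$ (n - i + (r - (k - i)), c)"
      using False r c by (simp add: Mk_def)
    have e: "n - (n - i) = i" using k i by simp
    have z: "(\<Sum>r'\<in>{0..<k-i}. f r') = 0" using False r by (intro sum.neutral) (auto simp: f_def Dk_def)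
    have "(\<Sum>s<i. f (k - i + s)) = (\<Sum>s<i. u $$ (n - i + (r - (k - i)), n - i + s) * Z2 $$ (n - i + s, c))"
      using False r c i by (auto simp: f_def Dk_def Mk_def intro!: sum.cong)
    then show ?thesis unfolding L R split z sh
      using left_mult_entry[OF Z2 u _ p cn, of "n - i"] e by simp
  qed
qed (auto simp: Mk_def Dk_def)


lemma det_Dk:
  fixes u :: "'a::field mat"
  assumes u: "u \<in> unitriangular_upper n" and k: "k \<le> n" and i: "i \<le> k"
  shows "det (Dk n k i u) = 1"
proof (rule unitri_det[of _ k])
  have d: "\<And>a. a<n \<Longrightarrow> u$$(a,a) = 1" and z: "\<And>a b. a<n \<Longrightarrow> b<a \<Longrightarrow> u$$(a,b) = 0"
    using u unfolding unitriangular_upper_def by auto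
  show "Dk n k i u \<in> carrier_mat k k" by (simp add: Dk_def)
  fix r assume r: "r < k"
  show "Dk n k i u $$ (r,r) = 1"
  proof (cases "r < k - i")
    case True
    then show ?thesis using r k i d[of "n - k + i + r"] by (simp add: Dk_def)
  next
    case False
    then show ?thesis using r k i d[of "n - i + (r - (k - i))"] by (simp add: Dk_def)
  qed
  fix j assume j: "j < r"
  show "Dk n k i u $$ (r,j) = 0"
  proof (cases "r < k - i")
    case True
    then show ?thesis using r j k i z[of "n - k + i + r" "n - k + i + j"] by (simp add: Dk_def)
  next
    case False
    show ?thesis
    proof (cases "j < k - i")
      case True
      then show ?thesis using False r j by (simp add: Dk_def)
    next
      case F2: False
      have "Dk n k i u $$ (r,j) = u $$ (n - i + (r - (k - i)), n - i + (j - (k - i)))"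
        using False F2 r j by (simp add: Dk_def)
      also have "\<dots> = 0" by (rule z) (use False F2 r j k i in linarith)+
      finally show ?thesis .
    qed
  qed
qed

theorem proposition1:
  fixes n k i :: nat and u v A :: "'a::field_char_0 mat"
  assumes "n \<ge> 1" and "1 \<le> k" and "k \<le> n" and "i \<le> k - 1"
    and "u \<in> unitriangular_upper n"
    and "inverts_mat u v" and "inverts_mat v u" and "v \<in> carrier_mat n n"
    and "A \<in> carrier_mat n n"
  shows "rho u v (J_poly n k i) A = J_poly n k i A"
proof -
  note u = assms(5) and v = assms(8) and A = assms(9) and k = assms(3)
  have i: "i \<le> k" using assms(4) by simp
  have uc: "u \<in> carrier_mat n n" using u unfolding unitriangular_upper_def by auto
  have uv: "u * v = 1\<^sub>m n" using assms(6) uc unfolding inverts_mat_def by simp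
  have vu: "v * u = 1\<^sub>m n" using assms(7) v unfolding inverts_mat_def by simp
  define Y where "Y = v * A * u"
  have Y: "Y \<in> carrier_mat n n" unfolding Y_def using v A uc by auto
  have adjA: "adj_mat A \<in> carrier_mat n n" using adj_mat(1)[OF A] .
  have adjY: "adj_mat Y \<in> carrier_mat n n" using adj_mat(1)[OF Y] .
  have aY: "adj_mat Y = v * adj_mat A * u" unfolding Y_def by (rule adj_conj[OF v uc A vu uv])
  have uY: "u * Y = A * u"
  proof -
    have "u * Y = (u * v) * A * u" unfolding Y_def using uc v A
      by (simp add: assoc_mult_mat[of _ n n _ n _ n])
    thus ?thesis using uv A by simp
  qed
  have uaY: "u * adj_mat Y = adj_mat A * u"
  proof -
    have "u * adj_mat Y = (u * v) * adj_mat A * u" unfolding aY using uc v adjA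
      by (simp add: assoc_mult_mat[of _ n n _ n _ n])
    thus ?thesis using uv adjA by simp
  qed
  define W where "W = mat k k (\<lambda>(t,c). u $$ (t,c))"
  have Wc: "W \<in> carrier_mat k k" unfolding W_def by simp
  have dW: "det W = 1"
    by (rule unitri_det[OF Wc], insert u k, auto simp: W_def unitriangular_upper_def)
  have e1: "Mk n k i (u * Y) (u * adj_mat Y) = Dk n k i u * Mk n k i Y (adj_mat Y)"
    by (rule Mk_left[OF Y adjY u k i])
  have e2: "Mk n k i (A * u) (adj_mat A * u) = Mk n k i A (adj_mat A) * W"
    unfolding W_def by (rule Mk_right[OF A adjA u k i])
  have MY: "Mk n k i Y (adj_mat Y) \<in> carrier_mat k k" by (simp add: Mk_def)
  have MA: "Mk n k i A (adj_mat A) \<in> carrier_mat k k" by (simp add: Mk_def)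
  have Dc: "Dk n k i u \<in> carrier_mat k k" by (simp add: Dk_def)
  have "det (Dk n k i u * Mk n k i Y (adj_mat Y)) = det (Mk n k i A (adj_mat A) * W)"
    using e1 e2 uY uaY by simp
  hence "det (Mk n k i Y (adj_mat Y)) = det (Mk n k i A (adj_mat A))"
    using det_mult[OF Dc MY] det_mult[OF MA Wc] dW det_Dk[OF u k i] by simp
  thus ?thesis unfolding rho_def J_Mk Y_def .
qed

end
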